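(* For each $m\ge1$, the sequence $(u_{k;m})_{k\ge0}$ is strictly increasing and converges to $b/(m+1)$: $$u_{0;m}<u_{1;m}<\dots<u_{k;m}<\dots,\qquad \lim_{k\to\infty}u_{k;m}=\frac{b}{m+1}.$$ Moreover, if $b=2$ and $d=1$, then $u_{0;m}=0$ for all $m\ge1$ and $u_{1;m}=2/(2^{m+1}-1)$ for all $m\ge0$.
   Context: Fix $b\ge2$ and $d\in\{0,\dots,b-1\}$. A string is a finite sequence $X=(d_l,\dots,d_1)$ of digits in $\{0,\dots,b-1\}$ (leading zeros allowed), of length $|X|=l\ge0$; its value is $n(X)=\sum_{i=1}^{l}d_ib^{i-1}$ ($0$ for the empty string). For $k\ge0$, $\mu_k=\sum_{X}b^{-|X|}\delta_{n(X)/b^{|X|}}$, the sum over all strings $X$ containing $d$ exactly $k$ times; it is a finite measure on $[0,1)$ of total mass $b$. The moments are $u_{k;m}=\int_{[0,1)}x^m\,d\mu_k(x)$. *)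

theory Defs
  imports "HOL-Analysis.Analysis"
begin

text \<open>A string in base b is a list of digits [d_l, ..., d_1] (most significant first,
  leading zeros allowed), each digit < b.\<close>

definition strings_with :: "nat \<Rightarrow> nat \<Rightarrow> nat \<Rightarrow> nat list set" where
  "strings_with b d k = {xs. set xs \<subseteq> {..<b} \<and> count_list xs d = k}"

text \<open>Value n(X) = sum d_i b^(i-1), with d_1 the last list entry.\<close>
definition str_val :: "nat \<Rightarrow> nat list \<Rightarrow> nat" where
  "str_val b xs = foldl (\<lambda>acc x. acc * b + x) 0 xs"

text \<open>Moment u_{k;m} = integral of x^m against
  mu_k = sum over strings X with exactly k copies of d of b^(-|X|) delta_{n(X)/b^|X|},
  written out as the (nonnegative, summable) sum of weights times x^m.\<close>
definition moment :: "nat \<Rightarrow> nat \<Rightarrow> nat \<Rightarrow> nat \<Rightarrow> real" where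
  "moment b d k m = (\<Sum>\<^sub>\<infinity> xs \<in> strings_with b d k.
      (1 / real b ^ length xs) * (real (str_val b xs) / real b ^ length xs) ^ m)"

end

theory Submission
  imports Defs
begin

definition ST :: "nat \<Rightarrow> nat \<Rightarrow> nat \<Rightarrow> (nat \<Rightarrow> bool) \<Rightarrow> nat list set" where
  "ST b d k P = {xs. set xs \<subseteq> {..<b} \<and> count_list xs d = k \<and> P (length xs)}"

definition fw :: "nat \<Rightarrow> nat \<Rightarrow> nat list \<Rightarrow> real" where
  "fw b m xs = (1 / real b ^ length xs) * (real (str_val b xs) / real b ^ length xs) ^ m"

lemma moment_ST: "moment b d k m = infsum (fw b m) (ST b d k (\<lambda>_. True))"
  unfolding moment_def fw_def ST_def strings_with_def by simp

lemma foldl_sv: "foldl (\<lambda>acc x. acc * b + x) (a::nat) ys = a * b ^ length ys + foldl (\<lambda>acc x. acc * b + x) 0 ys"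
proof (induction ys arbitrary: a)
  case Nil then show ?case by simp
next
  case (Cons y ys)
  have "foldl (\<lambda>acc x. acc * b + x) a (y#ys) = (a*b+y) * b ^ length ys + foldl (\<lambda>acc x. acc * b + x) 0 ys"
    using Cons[of "a*b+y"] by simp
  moreover have "foldl (\<lambda>acc x. acc * b + x) 0 (y#ys) = y * b ^ length ys + foldl (\<lambda>acc x. acc * b + x) 0 ys"
    using Cons[of y] by simp
  ultimately show ?case by (simp add: algebra_simps)
qed

lemma str_val_Nil[simp]: "str_val b [] = 0" by (simp add: str_val_def)

lemma str_val_Cons: "str_val b (e#ys) = e * b ^ length ys + str_val b ys"
  unfolding str_val_def using foldl_sv[of b e ys] foldl_sv[of b 0 "e#ys"] by simp

lemma str_val_less: "set ys \<subseteq> {..<b} \<Longrightarrow> str_val b ys < b ^ length ys"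
proof (induction ys)
  case Nil then show ?case by simp
next
  case (Cons e ys)
  then have e: "e + 1 \<le> b" and IH: "str_val b ys < b ^ length ys" by auto
  have "str_val b (e#ys) < e * b ^ length ys + b ^ length ys" using IH by (simp add: str_val_Cons)
  also have "\<dots> = (e+1) * b ^ length ys" by simp
  also have "\<dots> \<le> b * b ^ length ys" using e by (intro mult_right_mono) auto
  finally show ?case by simp
qed

lemma xv_bounds:
  assumes "set ys \<subseteq> {..<b}" "b > 0"
  shows "0 \<le> real (str_val b ys) / real b ^ length ys" "real (str_val b ys) / real b ^ length ys < 1"
proof -
  show "0 \<le> real (str_val b ys) / real b ^ length ys" by simp
  have "real (str_val b ys) < real (b ^ length ys)" using str_val_less[OF assms(1)] by linarith
  then show "real (str_val b ys) / real b ^ length ys < 1" using assms(2) by (simp add: divide_less_eq)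
qed

lemma fw_nonneg: "0 \<le> fw b m ys" unfolding fw_def by simp

lemma fw_le:
  assumes "set ys \<subseteq> {..<b}" "b > 0"
  shows "fw b m ys \<le> fw b 0 ys"
proof -
  have "(real (str_val b ys) / real b ^ length ys) ^ m \<le> 1"
    using xv_bounds[OF assms] by (intro power_le_one) auto
  then show ?thesis unfolding fw_def by (intro mult_left_mono) auto
qed

lemma fw0: "fw b 0 ys = 1 / real b ^ length ys" unfolding fw_def by simp

lemma fw_Cons:
  assumes "b > 0"
  shows "fw b m (e#ys) = (1/real b)^(m+1) * (\<Sum>j\<le>m. real (m choose j) * real e ^ (m-j) * fw b j ys)"
proof -
  let ?n = "length ys" let ?x = "real (str_val b ys) / real b ^ ?n"
  have bn: "real b ^ ?n > 0" using assms by simp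
  have "real (str_val b (e#ys)) / real b ^ length (e#ys) = (real e + ?x) / real b"
    using bn by (simp add: str_val_Cons field_simps)
  then have "fw b m (e#ys) = (1/real b) * (1 / real b ^ ?n) * ((real e + ?x) / real b)^m"
    unfolding fw_def by simp
  also have "\<dots> = (1/real b)^(m+1) * ((1 / real b ^ ?n) * (?x + real e)^m)"
    by (simp add: power_divide field_simps)
  also have "(?x + real e)^m = (\<Sum>j\<le>m. real (m choose j) * ?x ^ j * real e ^ (m-j))"
    by (rule binomial_ring)
  also have "(1 / real b ^ ?n) * \<dots> = (\<Sum>j\<le>m. real (m choose j) * real e ^ (m-j) * fw b j ys)"
    unfolding fw_def sum_distrib_left by (intro sum.cong) (auto simp: algebra_simps)
  finally show ?thesis .
qed

lemma ST_decomp: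
  assumes "d < b"
  shows "ST b d k P = (if k = 0 \<and> P 0 then {[]} else {})
     \<union> (\<Union>e\<in>{..<b}-{d}. Cons e ` ST b d k (\<lambda>n. P (Suc n)))
     \<union> (if k > 0 then Cons d ` ST b d (k-1) (\<lambda>n. P (Suc n)) else {})"
proof (intro set_eqI iffI)
  fix xs assume "xs \<in> ST b d k P"
  then show "xs \<in> (if k = 0 \<and> P 0 then {[]} else {})
     \<union> (\<Union>e\<in>{..<b}-{d}. Cons e ` ST b d k (\<lambda>n. P (Suc n)))
     \<union> (if k > 0 then Cons d ` ST b d (k-1) (\<lambda>n. P (Suc n)) else {})"
    by (cases xs) (auto simp: ST_def split: if_splits)
next
  fix xs assume "xs \<in> (if k = 0 \<and> P 0 then {[]} else {})
     \<union> (\<Union>e\<in>{..<b}-{d}. Cons e ` ST b d k (\<lambda>n. P (Suc n)))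
     \<union> (if k > 0 then Cons d ` ST b d (k-1) (\<lambda>n. P (Suc n)) else {})"
  then show "xs \<in> ST b d k P"
    using assms by (auto simp: ST_def split: if_splits)
qed

lemma has_sum_sum_fin:
  fixes f :: "'a \<Rightarrow> 'c \<Rightarrow> real"
  assumes "finite A" "\<And>a. a \<in> A \<Longrightarrow> (f a has_sum s a) S"
  shows "((\<lambda>x. \<Sum>a\<in>A. f a x) has_sum (\<Sum>a\<in>A. s a)) S"
  using assms
proof (induction A rule: finite_induct)
  case empty then show ?case by simp
next
  case (insert a A)
  have "(f a has_sum s a) S" using insert.prems by simp
  moreover have "((\<lambda>x. \<Sum>a\<in>A. f a x) has_sum (\<Sum>a\<in>A. s a)) S" using insert by simp
  ultimately have "((\<lambda>x. f a x + (\<Sum>a\<in>A. f a x)) has_sum (s a + (\<Sum>a\<in>A. s a))) S"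
    by (rule has_sum_add)
  then show ?case using insert.hyps by simp
qed

lemma cons_has_sum:
  assumes b: "b > 0" and hs: "\<And>j. j \<le> m \<Longrightarrow> (fw b j has_sum s j) A"
  shows "(fw b m has_sum ((1/real b)^(m+1) * (\<Sum>j\<le>m. real (m choose j) * real e^(m-j) * s j))) (Cons e ` A)"
proof -
  have "((\<lambda>ys. (1/real b)^(m+1) * (\<Sum>j\<le>m. real (m choose j) * real e ^ (m-j) * fw b j ys)) has_sum
        ((1/real b)^(m+1) * (\<Sum>j\<le>m. real (m choose j) * real e^(m-j) * s j))) A"
    by (intro has_sum_cmult_right has_sum_sum_fin) (auto intro!: has_sum_cmult_right hs)
  then have "((fw b m \<circ> Cons e) has_sum ((1/real b)^(m+1) * (\<Sum>j\<le>m. real (m choose j) * real e^(m-j) * s j))) A"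
    by (subst has_sum_cong[where g="\<lambda>ys. (1/real b)^(m+1) * (\<Sum>j\<le>m. real (m choose j) * real e ^ (m-j) * fw b j ys)"])
       (simp_all add: fw_Cons[OF b])
  then show ?thesis by (subst has_sum_reindex) auto
qed

lemma decomp_has_sum:
  assumes b: "b > 0" "d < b"
  and hs: "\<And>j. j \<le> m \<Longrightarrow> (fw b j has_sum s j) (ST b d k (\<lambda>n. P (Suc n)))"
  and ht: "\<And>j. k > 0 \<Longrightarrow> j \<le> m \<Longrightarrow> (fw b j has_sum t j) (ST b d (k-1) (\<lambda>n. P (Suc n)))"
  shows "(fw b m has_sum ((if k = 0 \<and> P 0 then 0^m else 0)
     + (\<Sum>e\<in>{..<b}-{d}. (1/real b)^(m+1) * (\<Sum>j\<le>m. real (m choose j) * real e^(m-j) * s j))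
     + (if k > 0 then (1/real b)^(m+1) * (\<Sum>j\<le>m. real (m choose j) * real d^(m-j) * t j) else 0))) (ST b d k P)"
proof -
  have h1: "(fw b m has_sum (if k = 0 \<and> P 0 then 0^m else 0)) (if k = 0 \<and> P 0 then {[]} else {})"
  proof (cases "k = 0 \<and> P 0")
    case True
    have e: "fw b m [] = 0^m" by (simp add: fw_def)
    have "(fw b m has_sum (sum (fw b m) {[]})) {[]}" by (rule has_sum_finite) simp
    then have "(fw b m has_sum 0^m) {[]}" by (simp only: e sum.insert finite.emptyI empty_iff sum.empty add_0_right not_False_eq_True)
    then show ?thesis using True by (simp only: if_P)
  next
    case False then show ?thesis by (simp only: if_not_P[OF False] if_False has_sum_empty)
  qed
  have h2: "(fw b m has_sum (\<Sum>e\<in>{..<b}-{d}. (1/real b)^(m+1) * (\<Sum>j\<le>m. real (m choose j) * real e^(m-j) * s j)))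
             (\<Union>e\<in>{..<b}-{d}. Cons e ` ST b d k (\<lambda>n. P (Suc n)))"
    by (intro sum_has_sum cons_has_sum[OF b(1)] hs) auto
  have h3: "(fw b m has_sum (if k > 0 then (1/real b)^(m+1) * (\<Sum>j\<le>m. real (m choose j) * real d^(m-j) * t j) else 0))
          (if k > 0 then Cons d ` ST b d (k-1) (\<lambda>n. P (Suc n)) else {})"
    using cons_has_sum[OF b(1) ht] by auto
  have "(fw b m has_sum ((if k = 0 \<and> P 0 then 0^m else 0)
     + (\<Sum>e\<in>{..<b}-{d}. (1/real b)^(m+1) * (\<Sum>j\<le>m. real (m choose j) * real e^(m-j) * s j))
     + (if k > 0 then (1/real b)^(m+1) * (\<Sum>j\<le>m. real (m choose j) * real d^(m-j) * t j) else 0)))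
     ((if k = 0 \<and> P 0 then {[]} else {})
     \<union> (\<Union>e\<in>{..<b}-{d}. Cons e ` ST b d k (\<lambda>n. P (Suc n)))
     \<union> (if k > 0 then Cons d ` ST b d (k-1) (\<lambda>n. P (Suc n)) else {}))"
    by (intro has_sum_Un_disjoint h1 h2 h3) auto
  then show ?thesis by (subst ST_decomp[OF b(2)])
qed


definition R :: "nat \<Rightarrow> (nat \<Rightarrow> real) \<Rightarrow> nat \<Rightarrow> real" where
  "R e v m = (\<Sum>j\<le>m. real (m choose j) * real e ^ (m-j) * v j)"

lemma R0: "R e v 0 = v 0" by (simp add: R_def)

lemma ST_finite: "finite (ST b d k (\<lambda>l. l \<le> L))"
proof -
  have "ST b d k (\<lambda>l. l \<le> L) \<subseteq> {xs. set xs \<subseteq> {..<b} \<and> length xs \<le> L}"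
    by (auto simp: ST_def)
  then show ?thesis using finite_lists_length_le[of "{..<b}" L] finite_subset by blast
qed

lemma card_E: "d < b \<Longrightarrow> card ({..<b} - {d}) = b - 1"
  by simp

lemma trunc_bound:
  assumes b: "b \<ge> 2" "d < b"
  shows "sum (fw b 0) (ST b d k (\<lambda>l. l \<le> L)) \<le> real b"
  using b
proof (induction L arbitrary: k)
  case 0
  have "ST b d k (\<lambda>l. l \<le> 0) = (if k = 0 then {[]} else {})"
    by (auto simp: ST_def)
  then show ?case using b by (simp add: fw0)
next
  case (Suc L)
  have bp: "b > 0" using b by simp
  let ?s = "\<lambda>j. sum (fw b j) (ST b d k (\<lambda>l. l \<le> L))"
  let ?t = "\<lambda>j. sum (fw b j) (ST b d (k-1) (\<lambda>l. l \<le> L))"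
  have "(fw b 0 has_sum ((if k = 0 \<and> 0 \<le> Suc L then 0^0 else 0)
     + (\<Sum>e\<in>{..<b}-{d}. (1/real b)^(0+1) * (\<Sum>j\<le>0. real (0 choose j) * real e^(0-j) * ?s j))
     + (if k > 0 then (1/real b)^(0+1) * (\<Sum>j\<le>0. real (0 choose j) * real d^(0-j) * ?t j) else 0)))
     (ST b d k (\<lambda>l. l \<le> Suc L))"
    by (rule decomp_has_sum[OF bp b(2)]) (auto intro!: has_sum_finiteI ST_finite)
  moreover have "(fw b 0 has_sum (sum (fw b 0) (ST b d k (\<lambda>l. l \<le> Suc L)))) (ST b d k (\<lambda>l. l \<le> Suc L))"
    by (rule has_sum_finite[OF ST_finite])
  ultimately have eq: "sum (fw b 0) (ST b d k (\<lambda>l. l \<le> Suc L)) =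
      (if k = 0 then 1 else 0) + real (b-1) * (?s 0 / real b) + (if k > 0 then ?t 0 / real b else 0)"
    using has_sum_unique b(2) by (fastforce simp: card_E)
  have s: "?s 0 \<le> real b" using Suc by blast
  have t: "?t 0 \<le> real b" using Suc by blast
  have b1: "real (b-1) = real b - 1" using b by simp
  have "?s 0 / real b \<le> 1" using s bp by (simp add: field_simps)
  then have "real (b-1) * (?s 0 / real b) \<le> real (b-1)"
    using mult_left_mono[of "?s 0 / real b" 1 "real (b-1)"] by simp
  show ?case
  proof (cases "k = 0")
    case True
    then show ?thesis using eq \<open>real (b-1) * (?s 0 / real b) \<le> real (b-1)\<close> b1 by simp
  next
    case False
    have B: "?t 0 / real b \<le> 1" using t bp by (simp add: field_simps)
    have E: "sum (fw b 0) (ST b d k (\<lambda>l. l \<le> Suc L)) = real (b-1) * (?s 0 / real b) + ?t 0 / real b"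
      using eq False by simp
    show ?thesis using E B \<open>real (b-1) * (?s 0 / real b) \<le> real (b-1)\<close> b1 by linarith
  qed
qed

lemma summable0:
  assumes b: "b \<ge> 2" "d < b"
  shows "fw b 0 summable_on ST b d k (\<lambda>_. True)"
proof (rule nonneg_bdd_above_summable_on)
  show "\<And>x. x \<in> ST b d k (\<lambda>_. True) \<Longrightarrow> 0 \<le> fw b 0 x" by (simp add: fw_nonneg)
  show "bdd_above (sum (fw b 0) ` {F. F \<subseteq> ST b d k (\<lambda>_. True) \<and> finite F})"
  proof (rule bdd_aboveI)
    fix y assume "y \<in> sum (fw b 0) ` {F. F \<subseteq> ST b d k (\<lambda>_. True) \<and> finite F}"
    then obtain F where F: "F \<subseteq> ST b d k (\<lambda>_. True)" "finite F" and y: "y = sum (fw b 0) F" by auto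
    define L where "L = (\<Sum>x\<in>F. length x)"
    have "F \<subseteq> ST b d k (\<lambda>l. l \<le> L)"
    proof
      fix x assume "x \<in> F"
      then have "length x \<le> L" unfolding L_def using F(2) by (intro member_le_sum) auto
      then show "x \<in> ST b d k (\<lambda>l. l \<le> L)" using F \<open>x \<in> F\<close> by (auto simp: ST_def)
    qed
    then have "sum (fw b 0) F \<le> sum (fw b 0) (ST b d k (\<lambda>l. l \<le> L))"
      by (intro sum_mono2 ST_finite) (auto simp: fw_nonneg)
    also have "\<dots> \<le> real b" by (rule trunc_bound[OF b])
    finally show "y \<le> real b" using y by simp
  qed
qed

lemma summable:
  assumes b: "b \<ge> 2" "d < b"
  shows "fw b m summable_on ST b d k (\<lambda>_. True)"
  by (rule summable_on_comparison_test[OF summable0[OF b]]) (use b in \<open>auto simp: fw_nonneg ST_def intro!: fw_le\<close>)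

lemma moment_has_sum:
  assumes b: "b \<ge> 2" "d < b"
  shows "(fw b m has_sum moment b d k m) (ST b d k (\<lambda>_. True))"
  unfolding moment_ST using summable[OF b] by (rule has_sum_infsum)

lemma rec:
  assumes b: "b \<ge> 2" "d < b"
  shows "moment b d k m = (if k = 0 then 0^m else 0)
     + (\<Sum>e\<in>{..<b}-{d}. (1/real b)^(m+1) * R e (moment b d k) m)
     + (if k > 0 then (1/real b)^(m+1) * R d (moment b d (k-1)) m else 0)"
proof -
  have bp: "b > 0" using b by simp
  have "(fw b m has_sum ((if k = 0 \<and> True then 0^m else 0)
     + (\<Sum>e\<in>{..<b}-{d}. (1/real b)^(m+1) * (\<Sum>j\<le>m. real (m choose j) * real e^(m-j) * moment b d k j))
     + (if k > 0 then (1/real b)^(m+1) * (\<Sum>j\<le>m. real (m choose j) * real d^(m-j) * moment b d (k-1) j) else 0)))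
     (ST b d k (\<lambda>_. True))"
    by (rule decomp_has_sum[OF bp b(2)]) (auto intro!: moment_has_sum[OF b])
  then show ?thesis using moment_has_sum[OF b, of m k] has_sum_unique unfolding R_def by fastforce
qed


lemma R_split: "R e v m = v m + (\<Sum>j<m. real (m choose j) * real e ^ (m-j) * v j)"
proof -
  have "{..m} = insert m {..<m}" by auto
  then show ?thesis unfolding R_def by simp
qed

lemma R_diff: "R e v m - R e w m = R e (\<lambda>j. v j - w j) m"
  unfolding R_def by (simp add: sum_subtractf[symmetric] algebra_simps)

lemma R_zero: "R e (\<lambda>_. 0) m = 0" unfolding R_def by simp

context
  fixes b d :: nat
  assumes b: "b \<ge> 2" "d < b"
begin

lemma u_nonneg: "0 \<le> moment b d k m"
  unfolding moment_ST by (rule infsum_nonneg) (simp add: fw_nonneg)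

lemma u_le0: "moment b d k m \<le> moment b d k 0"
  unfolding moment_ST using b
  by (intro infsum_mono summable) (auto simp: ST_def intro!: fw_le)

lemma mass: "moment b d k 0 = real b"
proof (induction k)
  case 0
  have "moment b d 0 0 = 1 + real (b-1) * (moment b d 0 0 / real b)"
    using rec[OF b, of 0 0] b(2) by (simp add: R0)
  moreover have "real (b-1) = real b - 1" using b by simp
  ultimately show ?case using b by (simp add: field_simps)
next
  case (Suc k)
  have "moment b d (Suc k) 0 = real (b-1) * (moment b d (Suc k) 0 / real b) + real b / real b"
    using rec[OF b, of "Suc k" 0] b(2) Suc by (simp add: R0)
  moreover have "real (b-1) = real b - 1" using b by simp
  ultimately show ?case using b by (simp add: field_simps)
qed

lemma u_le: "moment b d k m \<le> real b"
  using u_le0[of k m] mass[of k] by simp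

lemma u0pos:
  assumes "d = 0"
  shows "0 < moment b d 0 m"
proof -
  have mem: "[1] \<in> ST b d 0 (\<lambda>_. True)" using b assms by (auto simp: ST_def)
  have "fw b m [1] = (1/real b) * (1/real b)^m"
    by (simp add: fw_def str_val_Cons power_divide)
  then have pos: "fw b m [1] > 0" using b by simp
  have "sum (fw b m) {[1]} \<le> infsum (fw b m) (ST b d 0 (\<lambda>_. True))"
    by (rule finite_sum_le_infsum) (use mem summable[OF b] fw_nonneg in auto)
  then show ?thesis using pos unfolding moment_ST by simp
qed

lemma rec_pos:
  assumes "m \<ge> 1"
  shows "moment b d k m = (\<Sum>e\<in>{..<b}-{d}. (1/real b)^(m+1) * R e (moment b d k) m)
     + (1/real b)^(m+1) * R d (\<lambda>j. if k > 0 then moment b d (k-1) j else 0) m"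
proof -
  have "R d (\<lambda>j. if k > 0 then moment b d (k-1) j else 0) m = (if k > 0 then R d (moment b d (k-1)) m else 0)"
    by (cases "k > 0") (simp_all add: R_zero)
  then show ?thesis using rec[OF b, of k m] assms by simp
qed

lemma R_ge:
  assumes "\<And>j. 0 \<le> v j"
  shows "v m \<le> R e v m"
  unfolding R_split using assms by (auto intro!: sum_nonneg)

lemma R_ge0:
  assumes "\<And>j. 0 \<le> v j" "m \<ge> 1"
  shows "real e ^ m * v 0 \<le> R e v m"
proof -
  have "real (m choose 0) * real e ^ (m-0) * v 0 \<le> (\<Sum>j<m. real (m choose j) * real e ^ (m-j) * v j)"
    by (rule member_le_sum) (use assms in auto)
  then show ?thesis unfolding R_split using assms(1)[of m] by simp
qed

lemma R_nonneg:
  assumes "\<And>j. 0 \<le> v j"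
  shows "0 \<le> R e v m"
  unfolding R_def using assms by (auto intro!: sum_nonneg)

lemma mono_core:
  fixes k :: nat
  defines "P \<equiv> \<lambda>j. moment b d k j - (if k > 0 then moment b d (k-1) j else 0)"
  assumes HP: "\<And>j. 0 \<le> P j" and Hpos: "\<And>m. m \<ge> 1 \<Longrightarrow> 0 < R d P m"
  shows "m \<ge> 1 \<Longrightarrow> moment b d k m < moment b d (Suc k) m"
proof (induction m rule: less_induct)
  case (less m)
  define D where "D = (\<lambda>j. moment b d (Suc k) j - moment b d k j)"
  have Dnn: "0 \<le> D j" if "j < m" for j
  proof (cases "j = 0")
    case True then show ?thesis by (simp add: D_def mass)
  next
    case False then show ?thesis using less.IH[of j] that by (simp add: D_def)
  qed
  let ?c = "(1/real b)^(m+1)"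
  let ?E = "{..<b}-{d}"
  define Q where "Q = (\<lambda>e. \<Sum>j<m. real (m choose j) * real e ^ (m-j) * D j)"
  have Qnn: "0 \<le> Q e" for e unfolding Q_def using Dnn by (auto intro!: sum_nonneg)
  have eq1: "moment b d (Suc k) m = (\<Sum>e\<in>?E. ?c * R e (moment b d (Suc k)) m) + ?c * R d (moment b d k) m"
    using rec_pos[OF less.prems, of "Suc k"] by simp
  have eq2: "moment b d k m = (\<Sum>e\<in>?E. ?c * R e (moment b d k) m)
     + ?c * R d (\<lambda>j. if k > 0 then moment b d (k-1) j else 0) m"
    using rec_pos[OF less.prems, of k] by simp
  have "D m = (\<Sum>e\<in>?E. ?c * R e (moment b d (Suc k)) m - ?c * R e (moment b d k) m)
      + (?c * R d (moment b d k) m - ?c * R d (\<lambda>j. if k > 0 then moment b d (k-1) j else 0) m)"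
    unfolding D_def eq1 eq2 sum_subtractf by simp
  also have "\<dots> = (\<Sum>e\<in>?E. ?c * R e D m) + ?c * R d P m"
    unfolding right_diff_distrib[symmetric] R_diff D_def P_def by simp
  also have "(\<Sum>e\<in>?E. ?c * R e D m) = (\<Sum>e\<in>?E. ?c * D m + ?c * Q e)"
    unfolding R_split Q_def by (simp add: algebra_simps)
  also have "\<dots> = real (b-1) * ?c * D m + ?c * sum Q ?E"
    using b(2) by (simp add: sum.distrib sum_distrib_left)
  finally have eq: "D m * (1 - real (b-1) * ?c) = ?c * (sum Q ?E + R d P m)"
    by (simp add: algebra_simps)
  have cpos: "?c > 0" using b by simp
  have "?c \<le> 1 / real b" using b by (simp add: power_le_one_iff field_simps)
  then have "real (b-1) * ?c \<le> real (b-1) * (1/real b)" by (intro mult_left_mono) auto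
  also have "\<dots> < 1" using b by (simp add: field_simps)
  finally have pos1: "0 < 1 - real (b-1) * ?c" by simp
  have "0 < ?c * (sum Q ?E + R d P m)"
    using cpos Hpos[OF less.prems] Qnn by (intro mult_pos_pos add_nonneg_pos sum_nonneg) auto
  then have "0 < D m * (1 - real (b-1) * ?c)" using eq by simp
  then have "0 < D m" using pos1 by (simp add: zero_less_mult_iff)
  then show ?case by (simp add: D_def)
qed

lemma mono_step:
  assumes "m \<ge> 1"
  shows "moment b d k m < moment b d (Suc k) m"
  using assms
proof (induction k arbitrary: m)
  case 0
  show ?case
  proof (rule mono_core[of 0])
    show "\<And>j. 0 \<le> moment b d 0 j - (if 0 > (0::nat) then moment b d (0-1) j else 0)"
      by (simp add: u_nonneg)
    show "0 < R d (\<lambda>j. moment b d 0 j - (if 0 > (0::nat) then moment b d (0-1) j else 0)) m'" if "m' \<ge> 1" for m'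
    proof (cases "d = 0")
      case True
      then show ?thesis using R_ge[of "moment b d 0" m' d] u0pos[OF True, of m'] u_nonneg by fastforce
    next
      case False
      have "real d ^ m' * moment b d 0 0 \<le> R d (moment b d 0) m'"
        by (rule R_ge0) (use that u_nonneg in auto)
      moreover have "0 < real d ^ m' * moment b d 0 0" using False b by (simp add: mass)
      ultimately show ?thesis by simp
    qed
    show "1 \<le> m" by fact
  qed
next
  case (Suc k)
  show ?case
  proof (rule mono_core[of "Suc k"])
    have "0 \<le> moment b d (Suc k) j - moment b d k j" for j
      using Suc.IH[of j] by (cases "j = 0") (auto simp: mass)
    then show "\<And>j. 0 \<le> moment b d (Suc k) j - (if 0 < Suc k then moment b d (Suc k - 1) j else 0)"
      by simp
    show "0 < R d (\<lambda>j. moment b d (Suc k) j - (if 0 < Suc k then moment b d (Suc k - 1) j else 0)) m'"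
      if "m' \<ge> 1" for m'
    proof -
      have "moment b d (Suc k) m' - moment b d k m' \<le> R d (\<lambda>j. moment b d (Suc k) j - moment b d k j) m'"
        by (rule R_ge) (use \<open>\<And>j. 0 \<le> moment b d (Suc k) j - moment b d k j\<close> in auto)
      then show ?thesis using Suc.IH[OF that] by simp
    qed
    show "1 \<le> m" by fact
  qed
qed

end


lemma binom_int:
  "(\<Sum>j\<le>m. real (m choose j) * real e ^ (m-j) * (1 / (real j + 1)))
     = ((real e + 1)^(m+1) - real e^(m+1)) / (real m + 1)"
proof -
  have c2: "real (m choose j) * real e ^ (m-j) * (1 / (real j + 1)) = real (Suc m choose Suc j) * real e ^ (m - j) / (real m + 1)" for j
  proof -
    have "real (Suc j) * real (Suc m choose Suc j) = real (Suc m) * real (m choose j)"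
      using Suc_times_binomial[of j m] by (metis of_nat_mult)
    then have h: "(real j + 1) * real (Suc m choose Suc j) = (real m + 1) * real (m choose j)"
      by (simp add: algebra_simps del: binomial_Suc_Suc)
    then show ?thesis by (simp add: frac_eq_eq mult.commute del: binomial_Suc_Suc)
  qed
  have "(1 + real e)^(m+1) = (\<Sum>i\<le>Suc m. real (Suc m choose i) * 1 ^ i * real e ^ (Suc m - i))"
    using binomial_ring[of 1 "real e" "Suc m"] by simp
  also have "\<dots> = real e ^ Suc m + (\<Sum>j\<le>m. real (Suc m choose Suc j) * real e ^ (m - j))"
    by (subst sum.atMost_Suc_shift) simp
  finally have bin: "(\<Sum>j\<le>m. real (Suc m choose Suc j) * real e ^ (m - j)) = (real e + 1)^(m+1) - real e^(m+1)"
    by (simp add: add.commute)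
  have "(\<Sum>j\<le>m. real (m choose j) * real e ^ (m-j) * (1 / (real j + 1)))
      = (\<Sum>j\<le>m. real (Suc m choose Suc j) * real e ^ (m - j)) / (real m + 1)"
    unfolding sum_divide_distrib by (intro sum.cong refl) (rule c2)
  then show ?thesis using bin by simp
qed

lemma V_eq:
  assumes "b > 0"
  shows "(1/real b)^(m+1) * (\<Sum>e<b. R e (\<lambda>j. real b / (real j + 1)) m) = real b / (real m + 1)"
proof -
  have pw: "R e (\<lambda>j. real b / (real j + 1)) m = real b * (((real (Suc e))^(m+1) - real e^(m+1)) / (real m + 1))" for e
  proof -
    have "R e (\<lambda>j. real b / (real j + 1)) m = real b * (\<Sum>j\<le>m. real (m choose j) * real e ^ (m-j) * (1 / (real j + 1)))"
      unfolding R_def sum_distrib_left by (intro sum.cong refl) simp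
    moreover have "real (Suc e) = real e + 1" by simp
    ultimately show ?thesis by (simp only: binom_int)
  qed
  have "(\<Sum>e<b. R e (\<lambda>j. real b / (real j + 1)) m)
     = (\<Sum>e<b. real b / (real m + 1) * ((real (Suc e))^(m+1) - real e^(m+1)))"
    by (intro sum.cong refl) (simp only: pw, simp)
  also have "\<dots> = real b / (real m + 1) * (\<Sum>e<b. (real (Suc e))^(m+1) - real e^(m+1))"
    by (simp only: sum_distrib_left)
  also have "(\<Sum>e<b. (real (Suc e))^(m+1) - real e^(m+1)) = real b ^ (m+1)"
    using sum_lessThan_telescope[of "\<lambda>e. real e ^ (m+1)" b] by simp
  finally show ?thesis using assms by (simp add: field_simps)
qed

lemma aux:
  fixes x y c a q :: real
  assumes "x = c * (a * x + q)" "y = c * (a * y + q)" "c * a < 1"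
  shows "x = y"
proof -
  have "x - y = c * (a * x + q) - c * (a * y + q)" using assms(1,2) by metis
  also have "\<dots> = c * a * (x - y)" by (simp add: algebra_simps)
  finally have "(x - y) * (1 - c * a) = 0" by (simp add: algebra_simps)
  then show ?thesis using assms(3) by simp
qed


context
  fixes b d :: nat
  assumes b: "b \<ge> 2" "d < b"
begin

lemma conv: "\<exists>L. (\<lambda>k. moment b d k m) \<longlonglongrightarrow> L"
proof (cases "m = 0")
  case True then show ?thesis using mass[OF b] by auto
next
  case False
  have "incseq (\<lambda>k. moment b d k m)"
    using mono_step[OF b, of m] False by (intro incseq_SucI less_imp_le) auto
  then obtain L where "(\<lambda>k. moment b d k m) \<longlonglongrightarrow> L"
    using incseq_convergent[of "\<lambda>k. moment b d k m" "real b"] u_le[OF b] by blast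
  then show ?thesis by blast
qed

definition L where "L m = lim (\<lambda>k. moment b d k m)"

lemma convL: "(\<lambda>k. moment b d k m) \<longlonglongrightarrow> L m"
  unfolding L_def using conv[of m] by (auto simp: convergent_LIMSEQ_iff[symmetric] convergent_def)

lemma L_eq: "L m = (1/real b)^(m+1) * (\<Sum>e<b. R e L m)"
proof -
  let ?c = "(1/real b)^(m+1)"
  have eq: "moment b d (Suc k) m = (\<Sum>e\<in>{..<b}-{d}. ?c * R e (moment b d (Suc k)) m) + ?c * R d (moment b d k) m" for k
    using rec[OF b, of "Suc k" m] by simp
  have "(\<lambda>k. moment b d (Suc k) m) \<longlonglongrightarrow> L m" using LIMSEQ_Suc[OF convL] .
  moreover have "(\<lambda>k. (\<Sum>e\<in>{..<b}-{d}. ?c * R e (moment b d (Suc k)) m) + ?c * R d (moment b d k) m)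
     \<longlonglongrightarrow> (\<Sum>e\<in>{..<b}-{d}. ?c * R e L m) + ?c * R d L m"
    unfolding R_def using LIMSEQ_Suc[OF convL] convL by (intro tendsto_intros)
  moreover have "(\<lambda>k. (\<Sum>e\<in>{..<b}-{d}. ?c * R e (moment b d (Suc k)) m) + ?c * R d (moment b d k) m)
     = (\<lambda>k. moment b d (Suc k) m)" by (rule ext) (rule eq[symmetric])
  ultimately have A: "(\<lambda>k. moment b d (Suc k) m) \<longlonglongrightarrow> (\<Sum>e\<in>{..<b}-{d}. ?c * R e L m) + ?c * R d L m"
    by simp
  have "L m = (\<Sum>e\<in>{..<b}-{d}. ?c * R e L m) + ?c * R d L m"
    by (rule LIMSEQ_unique[OF LIMSEQ_Suc[OF convL] A])
  also have "\<dots> = ?c * (\<Sum>e<b. R e L m)"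
  proof -
    have "(\<Sum>e<b. R e L m) = (\<Sum>e\<in>insert d ({..<b}-{d}). R e L m)"
      by (rule sum.cong) (use b in auto)
    also have "\<dots> = R d L m + (\<Sum>e\<in>{..<b}-{d}. R e L m)"
      by (rule sum.insert) auto
    finally have "(\<Sum>e<b. R e L m) = R d L m + (\<Sum>e\<in>{..<b}-{d}. R e L m)" .
    then show ?thesis by (simp add: sum_distrib_left algebra_simps)
  qed
  finally show ?thesis .
qed

lemma L_val: "L m = real b / (real m + 1)"
proof (induction m rule: less_induct)
  case (less m)
  show ?case
  proof (cases "m = 0")
    case True
    have "(\<lambda>k. moment b d k 0) = (\<lambda>k. real b)" using mass[OF b] by simp
    then have "(\<lambda>k. real b) \<longlonglongrightarrow> L 0" using convL[of 0] by simp
    then have "L 0 = real b" by (simp add: LIMSEQ_const_iff)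
    then show ?thesis using True by simp
  next
    case False
    let ?V = "\<lambda>j. real b / (real j + 1)"
    let ?c = "(1/real b)^(m+1)"
    define Q where "Q = (\<Sum>e<b. \<Sum>j<m. real (m choose j) * real e ^ (m-j) * ?V j)"
    have QL: "(\<Sum>e<b. \<Sum>j<m. real (m choose j) * real e ^ (m-j) * L j) = Q"
      unfolding Q_def using less.IH by (intro sum.cong refl) simp
    have e1: "L m = ?c * (real b * L m + Q)"
    proof -
      have "L m = ?c * (\<Sum>e<b. R e L m)" by (rule L_eq)
      also have "(\<Sum>e<b. R e L m) = real b * L m + Q"
        unfolding R_split sum.distrib QL by simp
      finally show ?thesis .
    qed
    have e2: "?V m = ?c * (real b * ?V m + Q)"
    proof -
      have "?V m = ?c * (\<Sum>e<b. R e ?V m)" using V_eq[of b m] b by simp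
      also have "(\<Sum>e<b. R e ?V m) = real b * ?V m + Q"
        unfolding R_split sum.distrib Q_def by simp
      finally show ?thesis .
    qed
    have lt: "?c * real b < 1"
    proof -
      have "?c * real b = (1/real b)^m" using b by (simp add: field_simps)
      also have "\<dots> < 1" using b False by (simp add: power_less_one_iff field_simps)
      finally show ?thesis .
    qed
    show ?thesis using aux[OF e1 e2 lt] .
  qed
qed

lemma limit: "(\<lambda>k. moment b d k m) \<longlonglongrightarrow> real b / (real m + 1)"
  using convL[of m] L_val[of m] by simp

end


lemma sv_zero: "set ys \<subseteq> {0} \<Longrightarrow> str_val b ys = 0"
  by (induction ys) (auto simp: str_val_Cons)

lemma special0:
  assumes "m \<ge> 1"
  shows "moment 2 1 0 m = 0"
  unfolding moment_ST
proof (rule infsum_0)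
  fix xs assume "xs \<in> ST 2 1 0 (\<lambda>_. True)"
  then have "\<forall>x\<in>set xs. x < 2 \<and> x \<noteq> 1" by (auto simp: ST_def count_list_0_iff)
  then have "set xs \<subseteq> {0}" by (fastforce simp: numeral_2_eq_2 less_Suc_eq)
  then show "fw 2 m xs = 0" using assms by (simp add: fw_def sv_zero)
qed

lemma special1: "moment 2 1 1 m = 2 / (2 ^ (m + 1) - 1)"
proof -
  have b: "(2::nat) \<ge> 2" "(1::nat) < 2" by auto
  let ?u = "moment 2 1 1 m"
  let ?c = "(1/real 2)^(m+1)"
  have E: "{..<2::nat} - {1} = {0}" by auto
  have z: "(\<Sum>j<m. real (m choose j) * real (0::nat) ^ (m - j) * moment 2 1 1 j) = 0"
    by (intro sum.neutral) auto
  have R0: "R 0 (moment 2 1 1) m = ?u"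
    unfolding R_split z by simp
  have "R 1 (moment 2 1 0) m = (\<Sum>j\<le>m. if j = 0 then 2 else 0)"
    unfolding R_def
  proof (intro sum.cong refl)
    fix j assume "j \<in> {..m}"
    show "real (m choose j) * real 1 ^ (m - j) * moment 2 1 0 j = (if j = 0 then 2 else 0)"
      using special0[of j] mass[OF b, of 0] by auto
  qed
  then have R1: "R 1 (moment 2 1 0) m = 2" by simp
  have d0: "(1::nat) - 1 = 0" by simp
  have eq0: "?u = 0 + ?c * ?u + ?c * 2"
    using rec[OF b, of 1 m] by (simp only: E R0 R1 one_neq_zero if_False zero_less_one if_True d0
       sum.insert finite.emptyI empty_iff sum.empty add_0_right not_False_eq_True)
  then have eq: "?u = ?c * ?u + ?c * 2" by (simp only: add_0_left)
  have p: "(2::real) ^ (m+1) > 1" by (rule one_less_power) auto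
  have "?u * (2 ^ (m+1) - 1) = 2"
  proof -
    have "?u * 2 ^ (m+1) = (?c * ?u + ?c * 2) * 2 ^ (m+1)" using eq by simp
    also have "\<dots> = ?u + 2" by (simp add: field_simps power_divide)
    finally show ?thesis by (simp add: algebra_simps)
  qed
  then show ?thesis using p by (simp add: field_simps)
qed

theorem mainTheorem11:
  fixes b d :: nat
  assumes "b \<ge> 2" and "d < b"
  shows "(\<forall>m\<ge>1. strict_mono (\<lambda>k. moment b d k m) \<and>
              (\<lambda>k. moment b d k m) \<longlonglongrightarrow> real b / (real m + 1))
       \<and> (b = 2 \<and> d = 1 \<longrightarrow>
            (\<forall>m\<ge>1. moment b d 0 m = 0) \<and>
            (\<forall>m. moment b d 1 m = 2 / (2 ^ (m + 1) - 1)))"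
proof (intro conjI allI impI)
  fix m :: nat assume m: "m \<ge> 1"
  show "strict_mono (\<lambda>k. moment b d k m)"
    unfolding strict_mono_Suc_iff using mono_step[OF assms m] by blast
  show "(\<lambda>k. moment b d k m) \<longlonglongrightarrow> real b / (real m + 1)"
    by (rule limit[OF assms])
next
  fix m :: nat assume "b = 2 \<and> d = 1" "m \<ge> 1"
  then show "moment b d 0 m = 0" using special0 by simp
next
  fix m :: nat assume "b = 2 \<and> d = 1"
  then show "moment b d 1 m = 2 / (2 ^ (m + 1) - 1)" using special1 by simp
qed

end
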